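(* Let $X$ be a Polish space and $\mathbf f=(f_n)_n$ a sequence of continuous real-valued functions on $X$ which is relatively compact in $\mathcal B_1(X)$. Then for every $L\in[\mathbb N]$: $L\in\mathcal L_{\mathbf f}$ if and only if the tree $T_L$ is well-founded.
   Context: $\mathcal B_1(X)$ is the set of real-valued Baire-1 functions on $X$; $(f_n)_n$ is relatively compact in $\mathcal B_1(X)$ if the closure of $\{f_n\}$ in $\mathbb R^X$ (pointwise topology) is compact and contained in $\mathcal B_1(X)$. $[\mathbb N]$ is the set of infinite subsets of $\mathbb N$; $\mathcal L_{\mathbf f}=\{L\in[\mathbb N]:(f_n)_{n\in L}\text{ converges pointwise}\}$. Fix a compatible complete metric on $X$, a countable dense $D\subseteq X$ and an enumeration $(B_n)_n$ of all closed balls with centers in $D$ and rational radii. A finite sequence $w=(l_0,\dots,l_k)\in\mathbb N^{<\mathbb N}$ is acceptable if $B_{l_0}\supseteq\dots\supseteq B_{l_k}$ and $\mathrm{diam}(B_{l_i})\le\frac1{i+1}$ for all $i$; the empty sequence is acceptable. $\mathrm{Fin}$ is the set of finite subsets of $\mathbb N$, $\mathrm{Fin}(L)$ those contained in $L$; $F<G$ means $\max F<\min G$. A tree on $\mathbb N\times\mathrm{Fin}\times\mathbb N$ is identified with a set of triples $(s,t,w)$ of finite sequences of equal length, closed under taking initial segments of equal length; it is well-founded if it has no infinite branch. For $d\in\mathbb N$ and $L\in[\mathbb N]$, $T^d_L$ is the set of $(s,t,w)$ with $|s|=|t|=|w|=k$ such that $s=(n_0<\dots<n_{k-1})$ with $n_i\in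 L$, $t=(F_0<\dots<F_{k-1})$ with $F_i\in\mathrm{Fin}(L)$, $w=(l_0,\dots,l_{k-1})$ acceptable, and for every $i<k$ and every $z\in B_{l_i}$ there is $m_i\in F_i$ with $|f_{n_i}(z)-f_{m_i}(z)|>\frac1{d+1}$. Then $T_L$ consists of the empty triple together with all $(d^\frown s',\{d\}^\frown t',d^\frown w')$ with $d\in\mathbb N$ and $(s',t',w')\in T^d_L$. *)

theory Defs
  imports "HOL-Analysis.Analysis"
begin

definition baire1 :: "('a::topological_space \<Rightarrow> real) \<Rightarrow> bool" where
  "baire1 g \<longleftrightarrow> (\<exists>h::nat \<Rightarrow> 'a \<Rightarrow> real. (\<forall>n. continuous_on UNIV (h n)) \<and>
      (\<forall>x. (\<lambda>n. h n x) \<longlonglongrightarrow> g x))"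

text \<open>Relative compactness in B1(X): closure of the range in the pointwise
  (product) topology of R^X is compact and consists of Baire-1 functions.\<close>
definition rel_compact_B1 :: "(nat \<Rightarrow> 'a::topological_space \<Rightarrow> real) \<Rightarrow> bool" where
  "rel_compact_B1 f \<longleftrightarrow> compact (closure (range f)) \<and> closure (range f) \<subseteq> {g. baire1 g}"

definition conv_set :: "(nat \<Rightarrow> 'a \<Rightarrow> real) \<Rightarrow> nat set set" where
  "conv_set f = {L. infinite L \<and> (\<forall>x. convergent (\<lambda>k. f (enumerate L k) x))}"

definition fin_less :: "nat set \<Rightarrow> nat set \<Rightarrow> bool" where
  "fin_less F G \<longleftrightarrow> (\<forall>a\<in>F. \<forall>b\<in>G. a < b)"

definition acceptable :: "(nat \<Rightarrow> 'a::metric_space set) \<Rightarrow> nat list \<Rightarrow> bool" where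
  "acceptable B w \<longleftrightarrow>
     (\<forall>i. Suc i < length w \<longrightarrow> B (w ! Suc i) \<subseteq> B (w ! i)) \<and>
     (\<forall>i < length w. diameter (B (w ! i)) \<le> 1 / (real i + 1))"

definition treeD ::
  "(nat \<Rightarrow> 'a::metric_space \<Rightarrow> real) \<Rightarrow> (nat \<Rightarrow> 'a set) \<Rightarrow> nat \<Rightarrow> nat set
   \<Rightarrow> (nat list \<times> nat set list \<times> nat list) set" where
  "treeD f B d L = {(s, t, w). length s = length t \<and> length t = length w \<and>
      sorted_wrt (<) s \<and> set s \<subseteq> L \<and>
      sorted_wrt fin_less t \<and> (\<forall>F\<in>set t. finite F \<and> F \<subseteq> L) \<and>
      acceptable B w \<and>
      (\<forall>i < length s. \<forall>z \<in> B (w ! i). \<exists>m \<in> t ! i.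
          \<bar>f (s ! i) z - f m z\<bar> > 1 / (real d + 1))}"

definition treeL ::
  "(nat \<Rightarrow> 'a::metric_space \<Rightarrow> real) \<Rightarrow> (nat \<Rightarrow> 'a set) \<Rightarrow> nat set
   \<Rightarrow> (nat list \<times> nat set list \<times> nat list) set" where
  "treeL f B L = {([], [], [])} \<union>
     {(d # s, {d} # t, d # w) | d s t w. (s, t, w) \<in> treeD f B d L}"

definition well_founded_tree :: "('a list \<times> 'b list \<times> 'c list) set \<Rightarrow> bool" where
  "well_founded_tree T \<longleftrightarrow> \<not> (\<exists>(\<sigma>::nat \<Rightarrow> 'a) (\<tau>::nat \<Rightarrow> 'b) (\<omega>::nat \<Rightarrow> 'c).
       \<forall>k. (map \<sigma> [0..<k], map \<tau> [0..<k], map \<omega> [0..<k]) \<in> T)"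

end

theory Submission
  imports Defs
begin

lemma diam_le_metric:
  fixes S :: "'a::metric_space set"
  assumes "S \<noteq> {}" "\<And>x y. x \<in> S \<Longrightarrow> y \<in> S \<Longrightarrow> dist x y \<le> \<delta>"
  shows "diameter S \<le> \<delta>"
  using assms by (auto simp: diameter_def intro!: cSUP_least)

lemma branch_tail:
  assumes "\<forall>k. (map \<sigma> [0..<k], map \<tau> [0..<k], map \<omega> [0..<k]) \<in> treeL f B L"
  shows "(map (\<lambda>i. \<sigma> (Suc i)) [0..<k], map (\<lambda>i. \<tau> (Suc i)) [0..<k],
          map (\<lambda>i. \<omega> (Suc i)) [0..<k]) \<in> treeD f B (\<sigma> 0) L"
  using assms[rule_format, of "Suc k"] unfolding treeL_def map_upt_Suc by auto

lemma treeD_facts: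
  assumes "(map n [0..<k], map F [0..<k], map l [0..<k]) \<in> treeD f B d L"
    and "i < k"
  shows "n i \<in> L" "F i \<subseteq> L" "\<forall>z \<in> B (l i). \<exists>m \<in> F i. \<bar>f (n i) z - f m z\<bar> > 1 / (real d + 1)"
    "diameter (B (l i)) \<le> 1 / (real i + 1)"
    "Suc i < k \<Longrightarrow> B (l (Suc i)) \<subseteq> B (l i)"
    "j < i \<Longrightarrow> n j < n i"
    "j < i \<Longrightarrow> fin_less (F j) (F i)"
  using assms unfolding treeD_def acceptable_def sorted_wrt_iff_nth_less
  by (auto simp: nth_map)

lemma conv_cauchy_L:
  fixes f :: "nat \<Rightarrow> 'a \<Rightarrow> real"
  assumes "infinite L" "convergent (\<lambda>k. f (enumerate L k) z)" "e > 0"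
  shows "\<exists>N. \<forall>a\<in>L. \<forall>b\<in>L. N \<le> a \<longrightarrow> N \<le> b \<longrightarrow> \<bar>f a z - f b z\<bar> < e"
proof -
  have "Cauchy (\<lambda>k. f (enumerate L k) z)" using assms(2) Cauchy_convergent_iff by blast
  then obtain M where M: "\<forall>p\<ge>M. \<forall>q\<ge>M. dist (f (enumerate L p) z) (f (enumerate L q) z) < e"
    using assms(3) unfolding Cauchy_def by blast
  show ?thesis
  proof (intro exI[of _ "enumerate L M"] ballI impI)
    fix a b assume ab: "a \<in> L" "b \<in> L" "enumerate L M \<le> a" "enumerate L M \<le> b"
    obtain p where p: "enumerate L p = a" using enumerate_Ex[OF assms(1) ab(1)] by blast
    obtain q where q: "enumerate L q = b" using enumerate_Ex[OF assms(1) ab(2)] by blast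
    have "M \<le> p" using ab(3) p assms(1) by (metis enumerate_mono not_le)
    moreover have "M \<le> q" using ab(4) q assms(1) by (metis enumerate_mono not_le)
    ultimately show "\<bar>f a z - f b z\<bar> < e" using M p q by (auto simp: dist_real_def)
  qed
qed

theorem lemma5p10:
  fixes f :: "nat \<Rightarrow> 'a::polish_space \<Rightarrow> real"
    and D :: "'a set" and B :: "nat \<Rightarrow> 'a set" and L :: "nat set"
  assumes cont: "\<And>n. continuous_on UNIV (f n)"
    and rc: "rel_compact_B1 f"
    and D_countable: "countable D" and D_dense: "closure D = UNIV"
    and B_enum: "range B = {cball c r | c r. c \<in> D \<and> r \<in> \<rat> \<and> r > 0}"
    and L_inf: "infinite L"
  shows "L \<in> conv_set f \<longleftrightarrow> well_founded_tree (treeL f B L)"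
proof
  have Bball: "\<exists>c r. B j = cball c r \<and> r > 0" for j
  proof -
    have "B j \<in> range B" by simp
    then show ?thesis unfolding B_enum by blast
  qed
  assume conv: "L \<in> conv_set f"
  show "well_founded_tree (treeL f B L)"
    unfolding well_founded_tree_def
  proof
    assume "\<exists>\<sigma> \<tau> \<omega>. \<forall>k. (map \<sigma> [0..<k], map \<tau> [0..<k], map \<omega> [0..<k]) \<in> treeL f B L"
    then obtain \<sigma> \<tau> \<omega> where br: "\<forall>k. (map \<sigma> [0..<k], map \<tau> [0..<k], map \<omega> [0..<k]) \<in> treeL f B L"
      by blast
    define n where "n = (\<lambda>i. \<sigma> (Suc i))"
    define F where "F = (\<lambda>i. \<tau> (Suc i))"
    define l where "l = (\<lambda>i. \<omega> (Suc i))"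
    define d where "d = \<sigma> 0"
    have T: "(map n [0..<k], map F [0..<k], map l [0..<k]) \<in> treeD f B d L" for k
      using branch_tail[OF br, of k] unfolding n_def F_def l_def d_def by simp
    note fa = treeD_facts[OF T]
    have nL: "n i \<in> L" for i using fa(1)[of i "Suc i"] by simp
    have FL: "F i \<subseteq> L" for i using fa(2)[of i "Suc i"] by simp
    have ineq: "\<forall>z \<in> B (l i). \<exists>m \<in> F i. \<bar>f (n i) z - f m z\<bar> > 1 / (real d + 1)" for i
      using fa(3)[of i "Suc i"] by simp
    have diam: "diameter (B (l i)) \<le> 1 / (real i + 1)" for i using fa(4)[of i "Suc i"] by simp
    have nest1: "B (l (Suc i)) \<subseteq> B (l i)" for i using fa(5)[of i "Suc (Suc i)"] by simp
    have nmono: "strict_mono n"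
      by (rule strict_monoI) (use fa(6) in blast)
    have Fless: "i < j \<Longrightarrow> fin_less (F i) (F j)" for i j using fa(7)[of j "Suc j" i] by simp
    have nest: "m \<le> k \<Longrightarrow> B (l k) \<subseteq> B (l m)" for m k
      by (induction k rule: dec_induct) (use nest1 in auto)
    have ne: "B j \<noteq> {}" for j using Bball[of j] by (metis centre_in_cball less_imp_le empty_iff)
    have cl: "closed (B j)" for j using Bball[of j] by auto
    have bd: "bounded (B j)" for j using Bball[of j] by auto
    obtain z where z: "\<And>i. z \<in> B (l i)"
    proof (rule decreasing_closed_nest[of "\<lambda>i. B (l i)"])
      show "closed (B (l i))" for i by (rule cl)
      show "B (l i) \<noteq> {}" for i by (rule ne)
      show "m \<le> k \<Longrightarrow> B (l k) \<subseteq> B (l m)" for m k by (rule nest)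
      fix \<epsilon> :: real assume "\<epsilon> > 0"
      then obtain i where i: "1 / (real i + 1) < \<epsilon>"
        by (metis nat_approx_posE of_nat_Suc add.commute)
      show "\<exists>i. \<forall>x\<in>B (l i). \<forall>y\<in>B (l i). dist x y < \<epsilon>"
      proof (intro exI[of _ i] ballI)
        fix x y assume "x \<in> B (l i)" "y \<in> B (l i)"
        then have "dist x y \<le> diameter (B (l i))" using diameter_bounded_bound bd by blast
        then show "dist x y < \<epsilon>" using diam[of i] i by linarith
      qed
    qed blast
    have "\<forall>i. \<exists>m. m \<in> F i \<and> \<bar>f (n i) z - f m z\<bar> > 1 / (real d + 1)"
      using ineq z by blast
    then obtain m where m: "\<And>i. m i \<in> F i" "\<And>i. \<bar>f (n i) z - f (m i) z\<bar> > 1 / (real d + 1)"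
      by metis
    have mmono: "strict_mono m"
      by (rule strict_monoI) (use Fless m(1) in \<open>auto simp: fin_less_def\<close>)
    have "convergent (\<lambda>k. f (enumerate L k) z)" using conv unfolding conv_set_def by blast
    then obtain N where N: "\<forall>a\<in>L. \<forall>b\<in>L. N \<le> a \<longrightarrow> N \<le> b \<longrightarrow> \<bar>f a z - f b z\<bar> < 1 / (real d + 1)"
      using conv_cauchy_L[OF L_inf] by (metis divide_pos_pos of_nat_0_le_iff zero_less_one add_nonneg_pos)
    have "N \<le> n N" using nmono strict_mono_imp_increasing by blast
    moreover have "N \<le> m N" using mmono strict_mono_imp_increasing by blast
    ultimately have "\<bar>f (n N) z - f (m N) z\<bar> < 1 / (real d + 1)"
      using N nL FL m(1) by blast
    with m(2)[of N] show False by linarith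
  qed
next
  assume wf: "well_founded_tree (treeL f B L)"
  have Bball: "\<exists>c r. B j = cball c r \<and> r > 0" for j
  proof -
    have "B j \<in> range B" by simp
    then show ?thesis unfolding B_enum by blast
  qed
  show "L \<in> conv_set f"
    unfolding conv_set_def
  proof (intro CollectI conjI L_inf allI)
    fix x
    show "convergent (\<lambda>k. f (enumerate L k) x)"
    proof (rule ccontr)
      assume nc: "\<not> convergent (\<lambda>k. f (enumerate L k) x)"
      then have "\<not> Cauchy (\<lambda>k. f (enumerate L k) x)" using Cauchy_convergent_iff by blast
      then obtain \<epsilon> :: real where \<epsilon>: "\<epsilon> > 0"
        "\<forall>M. \<exists>p\<ge>M. \<exists>q\<ge>M. \<epsilon> \<le> dist (f (enumerate L p) x) (f (enumerate L q) x)"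
        unfolding Cauchy_def by (meson not_less)
      obtain d :: nat where d: "1 / (real d + 1) < \<epsilon>"
        using \<epsilon>(1) by (metis nat_approx_posE of_nat_Suc add.commute)
      define e where "e = 1 / (real d + 1)"
      have P: "\<exists>a b. a \<in> L \<and> b \<in> L \<and> N \<le> a \<and> a < b \<and> e < \<bar>f a x - f b x\<bar>" for N
      proof -
        obtain p q where pq: "p \<ge> N" "q \<ge> N" "\<epsilon> \<le> dist (f (enumerate L p) x) (f (enumerate L q) x)"
          using \<epsilon>(2) by blast
        have ed: "e < \<bar>f (enumerate L p) x - f (enumerate L q) x\<bar>"
          using pq(3) d unfolding e_def dist_real_def by linarith
        have "e > 0" unfolding e_def by simp
        with ed have "p \<noteq> q" by auto
        have Np: "N \<le> enumerate L p" using pq(1) le_enumerate[OF L_inf, of p] by linarith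
        have Nq: "N \<le> enumerate L q" using pq(2) le_enumerate[OF L_inf, of q] by linarith
        show ?thesis
        proof (cases "p < q")
          case True
          then show ?thesis using ed Np enumerate_in_set[OF L_inf] enumerate_mono[OF _ L_inf] by blast
        next
          case False
          then have "q < p" using \<open>p \<noteq> q\<close> by simp
          moreover have "e < \<bar>f (enumerate L q) x - f (enumerate L p) x\<bar>" using ed by linarith
          ultimately show ?thesis using Nq enumerate_in_set[OF L_inf] enumerate_mono[OF _ L_inf] by blast
        qed
      qed
      have ballQ: "\<exists>j. x \<in> interior (B j) \<and> B j \<subseteq> U \<and> diameter (B j) \<le> \<delta>"
        if U: "open U" "x \<in> U" and \<delta>: "\<delta> > 0" for U \<delta>
      proof -
        obtain r0 where r0: "r0 > 0" "ball x r0 \<subseteq> U" using U open_contains_ball by blast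
        define \<rho> where "\<rho> = min r0 \<delta> / 4"
        have \<rho>: "\<rho> > 0" using r0 \<delta> unfolding \<rho>_def by simp
        obtain c where c: "c \<in> D" "dist c x < \<rho>"
          using D_dense \<rho> closure_approachable[of x D] by blast
        obtain r where r: "r \<in> \<rat>" "\<rho> < r" "r < 2 * \<rho>"
          using Rats_dense_in_real[of \<rho> "2*\<rho>"] \<rho> by auto
        have "cball c r \<in> range B" unfolding B_enum using c r \<rho> by (intro CollectI exI[of _ c] exI[of _ r]) auto
        then obtain j where j: "B j = cball c r" by auto
        have "x \<in> ball c r" using c r by (simp add: dist_commute)
        then have "x \<in> interior (B j)" unfolding j
          by (metis interior_mono interior_open ball_subset_cball open_ball subsetD)
        moreover have "B j \<subseteq> U"
        proof
          fix z assume "z \<in> B j"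
          then have "dist c z \<le> r" unfolding j by simp
          then have "dist x z < r0" using c r dist_triangle[of x z c] unfolding \<rho>_def
            by (simp add: dist_commute) linarith
          then show "z \<in> U" using r0 by auto
        qed
        moreover have "diameter (B j) \<le> \<delta>"
        proof (rule diam_le_metric)
          show "B j \<noteq> {}" using j r \<rho> by auto
          fix y z assume "y \<in> B j" "z \<in> B j"
          then have "dist c y \<le> r" "dist c z \<le> r" unfolding j by auto
          then have "dist y z \<le> 2 * r" using dist_triangle[of y z c] by (simp add: dist_commute)
          then show "dist y z \<le> \<delta>" using r unfolding \<rho>_def by linarith
        qed
        ultimately show ?thesis by blast
      qed
      define Q where "Q = (\<lambda>N U i (t::nat \<times> nat \<times> nat). fst t \<in> L \<and> fst (snd t) \<in> L \<and> N \<le> fst t \<and>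
          fst t < fst (snd t) \<and> B (snd (snd t)) \<subseteq> U \<and>
          (\<forall>z \<in> B (snd (snd t)). e < \<bar>f (fst t) z - f (fst (snd t)) z\<bar>) \<and>
          x \<in> interior (B (snd (snd t))) \<and> diameter (B (snd (snd t))) \<le> 1 / (real i + 1))"
      have ex: "\<exists>t. Q N U i t" if U: "open U" "x \<in> U" for N U i
      proof -
        obtain a b where ab: "a \<in> L" "b \<in> L" "N \<le> a" "a < b" "e < \<bar>f a x - f b x\<bar>" using P by blast
        define V where "V = U \<inter> {z. e < \<bar>f a z - f b z\<bar>}"
        have "open {z. e < \<bar>f a z - f b z\<bar>}"
          by (rule open_Collect_less) (auto intro!: continuous_intros cont)
        then have "open V" "x \<in> V" using U ab unfolding V_def by auto
        then obtain j where j: "x \<in> interior (B j)" "B j \<subseteq> V" "diameter (B j) \<le> 1 / (real i + 1)"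
          using ballQ[of V "1 / (real i + 1)"] by auto
        show ?thesis unfolding Q_def
          by (rule exI[of _ "(a, b, j)"]) (use ab j in \<open>auto simp: V_def\<close>)
      qed
      define g where "g = rec_nat (SOME t. Q 0 UNIV 0 t)
          (\<lambda>i t. SOME t'. Q (Suc (fst (snd t))) (interior (B (snd (snd t)))) (Suc i) t')"
      have g0: "g 0 = (SOME t. Q 0 UNIV 0 t)" unfolding g_def by simp
      have gS: "g (Suc i) = (SOME t'. Q (Suc (fst (snd (g i)))) (interior (B (snd (snd (g i))))) (Suc i) t')" for i
        unfolding g_def by simp
      have step: "Q (Suc (fst (snd (g i)))) (interior (B (snd (snd (g i))))) (Suc i) (g (Suc i))"
        if "x \<in> interior (B (snd (snd (g i))))" for i
        unfolding gS by (rule someI_ex, rule ex) (use that in auto)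
      have H: "\<exists>N U. Q N U i (g i)" for i
      proof (induction i)
        case 0
        show ?case unfolding g0 using someI_ex[OF ex[of UNIV 0 0]] by blast
      next
        case (Suc i)
        then have "x \<in> interior (B (snd (snd (g i))))" unfolding Q_def by blast
        then show ?case using step by blast
      qed
      have stepI: "Q (Suc (fst (snd (g i)))) (interior (B (snd (snd (g i))))) (Suc i) (g (Suc i))" for i
        using H[of i] step unfolding Q_def by blast
      define a where "a = (\<lambda>i. fst (g i))"
      define b where "b = (\<lambda>i. fst (snd (g i)))"
      define j where "j = (\<lambda>i. snd (snd (g i)))"
      have aL: "a i \<in> L" and bL: "b i \<in> L" and ab: "a i < b i"
        and ineq: "\<forall>z \<in> B (j i). e < \<bar>f (a i) z - f (b i) z\<bar>"
        and diam: "diameter (B (j i)) \<le> 1 / (real i + 1)" for i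
        using H[of i] unfolding Q_def a_def b_def j_def by auto
      have ba: "b i < a (Suc i)" and nest: "B (j (Suc i)) \<subseteq> B (j i)" for i
        using stepI[of i] interior_subset[of "B (j i)"] unfolding Q_def a_def b_def j_def by auto
      have am: "strict_mono a"
        by (rule strict_monoI_Suc) (use ab ba less_trans in blast)
      have bm: "strict_mono b"
        by (rule strict_monoI_Suc) (use ab ba less_trans in blast)
      define \<sigma> where "\<sigma> = case_nat d a"
      define \<tau> where "\<tau> = case_nat {d} (\<lambda>i. {b i})"
      define \<omega> where "\<omega> = case_nat d j"
      have "\<forall>k. (map \<sigma> [0..<k], map \<tau> [0..<k], map \<omega> [0..<k]) \<in> treeL f B L"
      proof
        fix k
        show "(map \<sigma> [0..<k], map \<tau> [0..<k], map \<omega> [0..<k]) \<in> treeL f B L"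
        proof (cases k)
          case 0
          then show ?thesis unfolding treeL_def by simp
        next
          case (Suc k')
          have T: "(map a [0..<k'], map (\<lambda>i. {b i}) [0..<k'], map j [0..<k']) \<in> treeD f B d L"
            unfolding treeD_def acceptable_def sorted_wrt_iff_nth_less
            using aL bL ineq diam nest strict_mono_less[OF am] strict_mono_less[OF bm]
            by (auto simp: nth_map fin_less_def e_def)
          show ?thesis unfolding Suc map_upt_Suc treeL_def \<sigma>_def \<tau>_def \<omega>_def
            using T by auto
        qed
      qed
      then show False using wf unfolding well_founded_tree_def by blast
    qed
  qed
qed

end
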